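(* Let $\mathcal{C}$ be a binary cyclic code of length $n$ whose generator polynomial $g\in\mathbb{F}_2[X]$, $g\mid X^n-1$, of degree $r$, is a product of distinct irreducible polynomials. Then the burst-covering radius $b$ of $\mathcal{C}$ satisfies \[ b=r-\min_{(a_0,\dots,a_{r-1})\in\mathbb{F}_2^r}Z\bigl(g,(a_0,\dots,a_{r-1})\bigr), \] where $Z(g,(a_0,\dots,a_{r-1}))$ is the maximum length of a run of zeros in the LFSR sequence with connection polynomial $g$ and initial conditions $a_0,\dots,a_{r-1}$. Alternatively, \[ b=r-\min_{c\in\mathcal{C}^\perp}Z(c), \] where $Z(c)$ is the maximum length of a run of zeros in $c$, with $c$ viewed cyclically.
   Context: For $g(X)=X^r+\sum_{i=0}^{r-1}m_iX^i$, an LFSR sequence with connection polynomial $g$ is a binary sequence $(a_k)_{k\ge0}$ with $a_k=\sum_{i=0}^{r-1}m_ia_{k-r+i}$ for all $k\ge r$; $a_0,\dots,a_{r-1}$ are its initial conditions. The burst-covering radius of a code $\mathcal{C}\subseteq\mathbb{F}_2^n$ is the least $b$ such that for every $y\in\mathbb{F}_2^n$ there is $c\in\mathcal{C}$ with $\operatorname{supp}(y-c)\subseteq\{i,\dots,i+b-1\}$ (indices modulo $n$) for some $i$. $\mathcal{C}^\perp$ is the dual code of $\mathcal{C}$. *)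

theory Defs
  imports "HOL-Computational_Algebra.Polynomial" "HOL-Library.Extended_Nat"
    "Berlekamp_Zassenhaus.Finite_Field"
begin

text \<open>The binary field F_2, realised as the integers modulo CARD(bool) = 2.\<close>
type_synonym gf2 = "bool mod_ring"

function lfsr :: "gf2 poly \<Rightarrow> gf2 list \<Rightarrow> nat \<Rightarrow> gf2" where
  "lfsr g a k = (if k < degree g then a ! k
                 else (\<Sum>i<degree g. coeff g i * lfsr g a (k - degree g + i)))"
  by auto
termination
  by (relation "measure (\<lambda>(g, a, k). k)") auto

definition max_zero_run_seq :: "(nat \<Rightarrow> gf2) \<Rightarrow> enat" where
  "max_zero_run_seq s = (SUP L \<in> {L. \<exists>k. \<forall>j<L. s (k + j) = 0}. enat L)"

definition Z_lfsr :: "gf2 poly \<Rightarrow> gf2 list \<Rightarrow> enat" where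
  "Z_lfsr g a = max_zero_run_seq (lfsr g a)"

text \<open>Maximum length of a run of zeros in a word c of length n, viewed cyclically
  (the zero word has value n).\<close>
definition max_zero_run_cyc :: "gf2 list \<Rightarrow> nat" where
  "max_zero_run_cyc c = Max {L. L \<le> length c \<and> (\<exists>i. \<forall>t<L. c ! ((i + t) mod length c) = 0)}"

definition cyclic_code :: "nat \<Rightarrow> gf2 poly \<Rightarrow> gf2 list set" where
  "cyclic_code n g = {c. length c = n \<and> g dvd Poly c}"

definition dual_code :: "nat \<Rightarrow> gf2 list set \<Rightarrow> gf2 list set" where
  "dual_code n C = {y. length y = n \<and> (\<forall>c\<in>C. (\<Sum>j<n. y ! j * c ! j) = 0)}"

definition in_burst :: "nat \<Rightarrow> nat \<Rightarrow> gf2 list \<Rightarrow> gf2 list \<Rightarrow> bool" where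
  "in_burst n b y c = (\<exists>i. \<forall>j<n. y ! j - c ! j \<noteq> 0 \<longrightarrow> (\<exists>t<b. j = (i + t) mod n))"

definition burst_covering_radius :: "nat \<Rightarrow> gf2 list set \<Rightarrow> nat" where
  "burst_covering_radius n C =
     (LEAST b. \<forall>y. length y = n \<longrightarrow> (\<exists>c\<in>C. in_burst n b y c))"

definition product_of_distinct_irreducibles :: "gf2 poly \<Rightarrow> bool" where
  "product_of_distinct_irreducibles g =
     (\<exists>fs. distinct fs \<and> (\<forall>f\<in>set fs. irreducible f) \<and> g = prod_list fs)"

end

theory Submission
  imports Defs
begin

declare lfsr.simps[simp del]

lemma gf2_cases: "(x::gf2) = 0 \<or> x = 1"
proof -
  obtain i where "i < CARD(bool)" "x = of_nat i" using surj_of_nat_mod_ring by blast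
  then show ?thesis by (cases i) auto
qed

lemma gf2_add_self[simp]: "(x::gf2) + x = 0"
proof -
  have "(1::gf2) + 1 = of_nat (CARD(bool))" by simp
  also have "\<dots> = 0" by (rule of_nat_card_eq_0)
  finally show ?thesis using gf2_cases[of x] by auto
qed

lemma gf2_neg[simp]: "- (x::gf2) = x"
  using gf2_add_self[of x] by (simp add: neg_eq_iff_add_eq_0)

lemma poly_mod_sum: "finite A \<Longrightarrow> (\<Sum>i\<in>A. f i) mod (g::'a::field poly) = (\<Sum>i\<in>A. f i mod g)"
  by (induction A rule: finite_induct) (auto simp: poly_mod_add_left)

lemma poly_sum_monoms:
  assumes "\<forall>t\<ge>b. coeff (e::'a::comm_ring_1 poly) t = 0"
  shows "e = (\<Sum>t<b. monom (coeff e t) t)"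
proof (rule poly_eqI)
  fix j
  have "coeff (\<Sum>t<b. monom (coeff e t) t) j = (\<Sum>t<b. if t = j then coeff e t else 0)"
    by (simp add: coeff_sum coeff_monom)
  also have "\<dots> = (if j < b then coeff e j else 0)"
    by (simp add: sum.delta')
  also have "\<dots> = coeff e j" using assms by auto
  finally show "coeff e j = coeff (\<Sum>t<b. monom (coeff e t) t) j" by simp
qed

lemma Poly_map_coeff:
  assumes "\<forall>j\<ge>N. coeff p j = 0"
  shows "Poly (map (coeff p) [0..<N]) = p"
proof (rule poly_eqI)
  fix j show "coeff (Poly (map (coeff p) [0..<N])) j = coeff p j"
    using assms by (cases "j < N") (auto simp: nth_default_def)
qed

lemma coeff_Poly_nth: "j < length y \<Longrightarrow> coeff (Poly y) j = y ! j"
  by (simp add: nth_default_def)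

lemma coeff_Poly_ge: "j \<ge> length y \<Longrightarrow> coeff (Poly y) j = 0"
  by (simp add: nth_default_def)

lemma mod_inj_aux: assumes "(i + t1) mod n = (i + t2) mod (n::nat)" "t1 < n" "t2 < n" "t1 \<le> t2" shows "t1 = t2"
proof -
  have "n dvd (i + t2) - (i + t1)" using assms(1,4) mod_eq_dvd_iff_nat[of "i + t1" "i + t2" n] by simp
  then have "n dvd t2 - t1" by simp
  moreover have "t2 - t1 < n" using assms by linarith
  ultimately have "t2 - t1 = 0" using dvd_imp_le by (metis not_gr0 linorder_not_le)
  then show ?thesis using assms(4) by simp
qed

locale lctx =
  fixes g :: "gf2 poly" and n :: nat
  assumes dvdg: "g dvd monom 1 n - 1" and n1: "n \<ge> 1" and deg1: "degree g \<ge> 1"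
begin

lemma g0: "g \<noteq> 0" using deg1 by auto

lemma one_mod: "(1::gf2 poly) mod g = 1"
  using deg1 by (simp add: mod_poly_less)

lemma r_le_n: "degree g \<le> n"
proof -
  have "coeff (monom (1::gf2) n - 1) 0 \<noteq> 0" using n1 by (simp add: coeff_monom)
  then have "monom (1::gf2) n - 1 \<noteq> 0" by (metis coeff_0)
  moreover have "degree (monom (1::gf2) n - 1) \<le> n"
    by (rule degree_diff_le) (simp_all add: degree_monom_le)
  ultimately show ?thesis using dvd_imp_degree_le[OF dvdg] by linarith
qed

lemma Xn_mod: "monom 1 n mod g = 1"
proof -
  have "(monom 1 n - 1) mod g = 0" using dvdg by simp
  then show ?thesis by (simp add: poly_mod_diff_left one_mod)
qed

lemma Xmod: "(monom c q * p) mod g = (monom c (q mod n) * p) mod g"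
proof -
  have "monom c q = (monom 1 n) ^ (q div n) * monom c (q mod n)"
    by (simp add: monom_power mult_monom)
  then have "(monom c q * p) mod g = (((monom 1 n) ^ (q div n) mod g) * (monom c (q mod n) * p)) mod g"
    by (simp add: mod_mult_left_eq mult.assoc)
  also have "(monom 1 n) ^ (q div n) mod g = 1"
    by (metis Xn_mod one_mod power_mod power_one)
  finally show ?thesis by simp
qed


definition U :: "gf2 poly \<Rightarrow> nat \<Rightarrow> gf2" where
  "U s k = coeff ((monom 1 k * s) mod g) (degree g - 1)"

lemma lead1: "coeff g (degree g) = 1"
  using gf2_cases[of "coeff g (degree g)"] g0 by auto

lemma g_split: "g = monom 1 (degree g) + (\<Sum>i<degree g. monom (coeff g i) i)"
proof -
  have "g = (\<Sum>i\<le>degree g. monom (coeff g i) i)" by (simp add: poly_as_sum_of_monoms)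
  also have "\<dots> = (\<Sum>i<Suc (degree g). monom (coeff g i) i)" by (simp add: lessThan_Suc_atMost)
  also have "\<dots> = monom 1 (degree g) + (\<Sum>i<degree g. monom (coeff g i) i)"
    by (simp add: lead1)
  finally show ?thesis .
qed

lemma U_rec:
  assumes "k \<ge> degree g"
  shows "U s k = (\<Sum>i<degree g. coeff g i * U s (k - degree g + i))"
proof -
  let ?r = "degree g"
  let ?S = "(\<Sum>i<?r. monom (coeff g i) (k - ?r + i) * s)"
  have "monom 1 (k - ?r) * s * g = monom 1 (k - ?r) * s * monom 1 ?r + monom 1 (k - ?r) * s * (\<Sum>i<?r. monom (coeff g i) i)"
    by (subst g_split) (simp add: distrib_left)
  also have "monom 1 (k - ?r) * s * monom 1 ?r = monom 1 k * s"
    using assms by (simp add: mult_monom mult.commute mult.left_commute)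
  also have "monom 1 (k - ?r) * s * (\<Sum>i<?r. monom (coeff g i) i) = ?S"
    by (simp add: sum_distrib_left mult_monom mult.commute mult.left_commute add.commute)
  finally have eq: "monom 1 k * s = monom 1 (k - ?r) * s * g - ?S" by (simp add: algebra_simps)
  have "(monom 1 k * s) mod g = - (?S mod g)"
    by (subst eq, simp add: poly_mod_diff_left)
  also have "?S mod g = (\<Sum>i<?r. smult (coeff g i) ((monom 1 (k - ?r + i) * s) mod g))"
    by (simp add: poly_mod_sum) (rule sum.cong, simp_all add: mod_smult_left[symmetric] smult_monom_mult)
  finally have "(monom 1 k * s) mod g = - (\<Sum>i<?r. smult (coeff g i) ((monom 1 (k - ?r + i) * s) mod g))" .
  then show ?thesis by (simp add: U_def coeff_sum)
qed

lemma U_diff: "U (p - q) k = U p k - U q k"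
  by (simp add: U_def algebra_simps poly_mod_diff_left)

lemma U_zero: "U 0 k = 0" by (simp add: U_def)

lemma U_period: "U s k = U s (k mod n)"
  unfolding U_def by (subst Xmod) simp

lemma U_shift: "U s (k + j) = coeff ((monom 1 j * ((monom 1 k * s) mod g)) mod g) (degree g - 1)"
  unfolding U_def by (simp add: mod_mult_right_eq mult.assoc[symmetric] mult_monom add.commute)

lemma lfsr_eq:
  assumes "\<forall>k\<ge>degree g. v k = (\<Sum>i<degree g. coeff g i * v (k - degree g + i))"
  shows "lfsr g (map v [0..<degree g]) k = v k"
proof (induction k rule: less_induct)
  case (less k)
  show ?case
  proof (cases "k < degree g")
    case True then show ?thesis by (subst lfsr.simps) simp
  next
    case False
    then have "lfsr g (map v [0..<degree g]) k = (\<Sum>i<degree g. coeff g i * lfsr g (map v [0..<degree g]) (k - degree g + i))"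
      by (subst lfsr.simps) simp
    also have "\<dots> = (\<Sum>i<degree g. coeff g i * v (k - degree g + i))"
      by (rule sum.cong) (use False deg1 less in auto)
    finally show ?thesis using assms False by simp
  qed
qed

lemma F1_dir1:
  assumes "degree w < degree g" "L \<le> degree g"
    "\<forall>j<L. coeff ((monom 1 j * w) mod g) (degree g - 1) = 0"
  shows "\<forall>i. degree g - L \<le> i \<longrightarrow> coeff w i = 0"
  using assms
proof (induction L arbitrary: w)
  case 0
  then show ?case by (auto intro: coeff_eq_0)
next
  case (Suc L)
  let ?r = "degree g"
  have "coeff w (?r - 1) = 0" using Suc.prems(3)[rule_format, of 0] Suc.prems(1)
    by (simp add: mod_poly_less)
  then have top: "\<forall>i\<ge>?r - 1. coeff w i = 0" using Suc.prems(1)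
  proof (intro allI impI)
    fix i assume i: "i \<ge> ?r - 1"
    show "coeff w i = 0"
    proof (cases "i = ?r - 1")
      case True then show ?thesis using \<open>coeff w (?r - 1) = 0\<close> by simp
    next
      case False then have "degree w < i" using i Suc.prems(1) by linarith
      then show ?thesis by (rule coeff_eq_0)
    qed
  qed
  have cw: "coeff (monom 1 1 * w) i = (if i < 1 then 0 else coeff w (i - 1))" for i
    by (simp add: coeff_monom_mult)
  have d: "degree (monom 1 1 * w) < ?r"
  proof -
    have "degree (monom 1 1 * w) \<le> ?r - 1"
      by (rule degree_le) (use top deg1 in \<open>auto simp: coeff_monom_mult\<close>)
    then show ?thesis using deg1 by linarith
  qed
  have "\<forall>j<L. coeff ((monom 1 j * (monom 1 1 * w)) mod g) (?r - 1) = 0"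
  proof (intro allI impI)
    fix j assume "j < L"
    then show "coeff ((monom 1 j * (monom 1 1 * w)) mod g) (?r - 1) = 0"
      using Suc.prems(3)[rule_format, of "Suc j"] by (simp add: mult.assoc[symmetric] mult_monom)
  qed
  from Suc.IH[OF d _ this] Suc.prems(2) have ih: "\<forall>i\<ge>?r - L. coeff (monom 1 1 * w) i = 0" by simp
  show ?case
  proof (intro allI impI)
    fix i assume "?r - Suc L \<le> i"
    then have "?r - L \<le> Suc i" by linarith
    from ih[rule_format, OF this] show "coeff w i = 0" by (simp add: coeff_monom_mult)
  qed
qed

lemma F1_dir2:
  assumes "L \<le> degree g" "\<forall>i. degree g - L \<le> i \<longrightarrow> coeff w i = 0"
  shows "\<forall>j<L. coeff ((monom 1 j * w) mod g) (degree g - 1) = 0"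
proof (intro allI impI)
  fix j assume j: "j < L"
  let ?r = "degree g"
  have z: "coeff (monom 1 j * w) i = 0" if "i \<ge> ?r - 1" for i
    using that j assms by (auto simp: coeff_monom_mult)
  have "degree (monom 1 j * w) \<le> ?r - 1"
    by (rule degree_le) (use z in auto)
  then have "degree (monom 1 j * w) < ?r" using deg1 by linarith
  then show "coeff ((monom 1 j * w) mod g) (?r - 1) = 0"
    using z by (simp add: mod_poly_less)
qed

lemma noconst:
  assumes "(monom 1 k * s) mod g = 0"
  shows "s mod g = 0"
proof -
  have "s mod g = (monom 1 (k * n) * s) mod g"
    by (subst Xmod) simp
  also have "monom 1 (k * n) * s = monom 1 (k * n - k) * (monom 1 k * s)"
  proof -
    have "k \<le> k * n" using n1 by simp
    then have "k * n = (k * n - k) + k" by simp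
    then have "monom (1::gf2) (k * n) = monom 1 (k * n - k) * monom 1 k"
      by (metis mult_monom mult_1)
    then show ?thesis by (simp add: mult.assoc)
  qed
  also have "(\<dots>) mod g = 0"
  proof -
    have "(monom 1 (k*n-k) * (monom 1 k * s)) mod g = (monom 1 (k*n-k) * ((monom 1 k * s) mod g)) mod g"
      by (rule mod_mult_right_eq[symmetric])
    then show ?thesis using assms by simp
  qed
  finally show ?thesis .
qed


lemma Xmod1: "monom c q mod g = monom c (q mod n) mod g"
  using Xmod[of c q 1] by simp

lemma deg_Poly_lt: "length l = degree g \<Longrightarrow> degree (Poly l) < degree g"
proof -
  assume l: "length l = degree g"
  have "degree (Poly l) \<le> degree g - 1"
    by (rule degree_le) (use l deg1 in \<open>auto simp: nth_default_def\<close>)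
  then show ?thesis using deg1 by linarith
qed

lemma U_inj:
  assumes "length l = degree g" "length l' = degree g"
    "map (U (Poly l)) [0..<degree g] = map (U (Poly l')) [0..<degree g]"
  shows "l = l'"
proof -
  let ?w = "Poly l - Poly l'"
  have dw: "degree ?w < degree g"
    by (rule degree_diff_less) (use deg_Poly_lt assms(1,2) in auto)
  have "\<forall>j<degree g. U (Poly l) j = U (Poly l') j"
  proof (intro allI impI)
    fix j assume "j < degree g"
    then show "U (Poly l) j = U (Poly l') j" using arg_cong[OF assms(3), of "\<lambda>xs. xs ! j"] by simp
  qed
  then have "\<forall>j<degree g. coeff ((monom 1 j * ?w) mod g) (degree g - 1) = 0"
    using U_diff by (simp add: U_def)
  from F1_dir1[OF dw order.refl this] have "\<forall>i. coeff ?w i = 0" by simp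
  then have "Poly l = Poly l'" by (simp add: poly_eq_iff)
  show ?thesis
  proof (rule nth_equalityI)
    show "length l = length l'" using assms by simp
    fix j assume "j < length l"
    have "coeff (Poly l) j = coeff (Poly l') j" using \<open>Poly l = Poly l'\<close> by simp
    then show "l ! j = l' ! j" using coeff_Poly_nth[of j l] coeff_Poly_nth[of j l'] \<open>j < length l\<close> assms(1,2)
      by simp
  qed
qed

lemma U_surj:
  assumes "length a = degree g"
  shows "\<exists>l. length l = degree g \<and> map (U (Poly l)) [0..<degree g] = a"
proof -
  let ?A = "{l::gf2 list. length l = degree g}"
  let ?f = "\<lambda>l. map (U (Poly l)) [0..<degree g]"
  have fin: "finite ?A" using finite_lists_length_eq[of "UNIV::gf2 set" "degree g"] by simp
  have "?f ` ?A = ?A"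
  proof (rule endo_inj_surj[OF fin])
    show "?f ` ?A \<subseteq> ?A" by auto
    show "inj_on ?f ?A"
    proof (rule inj_onI)
      fix x y assume "x \<in> ?A" "y \<in> ?A" "?f x = ?f y"
      then show "x = y" using U_inj[of x y] by simp
    qed
  qed
  moreover have "a \<in> ?A" using assms by simp
  ultimately have "a \<in> ?f ` ?A" by simp
  then show ?thesis by auto
qed

lemma lfsr_U: "lfsr g (map (U s) [0..<degree g]) = U s"
  by (rule ext, rule lfsr_eq) (use U_rec in auto)

lemma lfsr_surj:
  assumes "length a = degree g"
  shows "\<exists>l. length l = degree g \<and> lfsr g a = U (Poly l)"
proof -
  obtain l where "length l = degree g" "map (U (Poly l)) [0..<degree g] = a" using U_surj[OF assms] by blast
  then show ?thesis using lfsr_U[of "Poly l"] by auto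
qed

lemma Poly_deg: "degree s < N \<Longrightarrow> Poly (map (coeff s) [0..<N]) = s"
  by (rule Poly_map_coeff) (auto intro: coeff_eq_0)

lemma inj_h: "b \<le> n \<Longrightarrow> inj_on (\<lambda>t. (i + t) mod n) {..<b}"
proof (rule inj_onI)
  fix t1 t2 assume b: "b \<le> n" and t: "t1 \<in> {..<b}" "t2 \<in> {..<b}" and eq: "(i + t1) mod n = (i + t2) mod n"
  have "t1 < n" "t2 < n" using t b by auto
  show "t1 = t2"
  proof (cases "t1 \<le> t2")
    case True then show ?thesis using mod_inj_aux[of i t1 n t2] eq \<open>t1 < n\<close> \<open>t2 < n\<close> by blast
  next
    case False then show ?thesis using mod_inj_aux[of i t2 n t1] eq \<open>t1 < n\<close> \<open>t2 < n\<close> by simp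
  qed
qed

end

lemma run_le: "(\<forall>j<m. u (k + j) = 0) \<Longrightarrow> enat m \<le> max_zero_run_seq u"
  unfolding max_zero_run_seq_def by (rule SUP_upper) auto

lemma run_exists:
  assumes "enat m \<le> max_zero_run_seq u"
  shows "\<exists>k. \<forall>j<m. u (k + j) = 0"
proof (rule ccontr)
  assume b: "\<not> (\<exists>k. \<forall>j<m. u (k + j) = 0)"
  then have m0: "m \<noteq> 0" by auto
  have lt: "L < m" if "L \<in> {L. \<exists>k. \<forall>j<L. u (k + j) = 0}" for L
  proof (rule ccontr)
    assume "\<not> L < m" then have mL: "m \<le> L" by simp
    from that obtain k where "\<forall>j<L. u (k + j) = 0" by auto
    then have "\<forall>j<m. u (k + j) = 0" using mL by auto
    with b show False by blast
  qed
  have "max_zero_run_seq u \<le> enat (m - 1)"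
    unfolding max_zero_run_seq_def
  proof (rule SUP_least)
    fix L assume "L \<in> {L. \<exists>k. \<forall>j<L. u (k + j) = 0}"
    then have "L < m" by (rule lt)
    then show "enat L \<le> enat (m - 1)" by simp
  qed
  with assms have "enat m \<le> enat (m - 1)" by (rule order_trans)
  then show False using m0 by simp
qed


context lctx
begin

lemma burst_from:
  assumes y: "length y = n" and eq: "(monom 1 i * e) mod g = Poly y mod g" and e0: "\<forall>t\<ge>b. coeff e t = 0"
  shows "\<exists>c\<in>cyclic_code n g. in_burst n b y c"
proof -
  define E where "E = (\<Sum>t<b. monom (coeff e t) ((i + t) mod n))"
  have cE: "coeff E j = (\<Sum>t<b. if (i + t) mod n = j then coeff e t else 0)" for j
    by (simp add: E_def coeff_sum coeff_monom)
  have cE0: "coeff E j = 0" if "j \<ge> n" for j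
  proof -
    have "\<forall>t\<in>{..<b}. (if (i + t) mod n = j then coeff e t else 0) = 0"
    proof
      fix t assume "t \<in> {..<b}"
      have "(i + t) mod n < n" using n1 by simp
      with that show "(if (i + t) mod n = j then coeff e t else 0) = 0" by auto
    qed
    then show ?thesis by (simp add: cE)
  qed
  have EE: "E mod g = (monom 1 i * e) mod g"
  proof -
    have "E mod g = (\<Sum>t<b. monom (coeff e t) ((i + t) mod n) mod g)" by (simp add: E_def poly_mod_sum)
    also have "\<dots> = (\<Sum>t<b. monom (coeff e t) (i + t) mod g)"
      by (intro sum.cong refl) (rule Xmod1[symmetric])
    also have "\<dots> = (\<Sum>t<b. monom (coeff e t) (i + t)) mod g" by (simp add: poly_mod_sum)
    also have "(\<Sum>t<b. monom (coeff e t) (i + t)) = monom 1 i * e"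
      by (subst (2) poly_sum_monoms[OF e0]) (simp add: sum_distrib_left mult_monom)
    finally show ?thesis .
  qed
  define c where "c = map (coeff (Poly y - E)) [0..<n]"
  have Pc: "Poly c = Poly y - E" unfolding c_def
    by (rule Poly_map_coeff) (auto simp: nth_default_def y cE0)
  have "(Poly y - E) mod g = 0" by (simp add: poly_mod_diff_left EE eq)
  then have "c \<in> cyclic_code n g"
    unfolding cyclic_code_def using Pc by (simp add: c_def mod_eq_0_iff_dvd)
  moreover have "in_burst n b y c"
    unfolding in_burst_def
  proof (rule exI[of _ i], intro allI impI)
    fix j assume j: "j < n" and ne: "y ! j - c ! j \<noteq> 0"
    have "y ! j - c ! j = coeff E j" using j y by (simp add: c_def nth_default_def)
    with ne have "(\<Sum>t<b. if (i + t) mod n = j then coeff e t else 0) \<noteq> 0" by (simp add: cE)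
    show "\<exists>t<b. j = (i + t) mod n"
    proof (rule ccontr)
      assume "\<not> (\<exists>t<b. j = (i + t) mod n)"
      then have "\<forall>t\<in>{..<b}. (if (i + t) mod n = j then coeff e t else 0) = 0" by auto
      then have "(\<Sum>t<b. if (i + t) mod n = j then coeff e t else 0) = 0" by (rule sum.neutral)
      with \<open>(\<Sum>t<b. if (i + t) mod n = j then coeff e t else 0) \<noteq> 0\<close> show False by simp
    qed
  qed
  ultimately show ?thesis by blast
qed

lemma burst_to:
  assumes y: "length y = n" and c: "c \<in> cyclic_code n g" and ib: "in_burst n b y c" and b: "b \<le> n"
  shows "\<exists>i e. (\<forall>t\<ge>b. coeff e t = 0) \<and> (monom 1 i * e) mod g = Poly y mod g"
proof -
  obtain i where hi: "\<forall>j<n. y ! j - c ! j \<noteq> 0 \<longrightarrow> (\<exists>t<b. j = (i + t) mod n)"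
    using ib unfolding in_burst_def by blast
  have lc: "length c = n" and gd: "g dvd Poly c" using c unfolding cyclic_code_def by auto
  define D where "D = Poly y - Poly c"
  have cD: "coeff D j = (if j < n then y ! j - c ! j else 0)" for j
    by (cases "j < n") (simp_all add: D_def nth_default_def y lc)
  define h where "h t = (i + t) mod n" for t
  define e where "e = (\<Sum>t<b. monom (coeff D (h t)) t)"
  have e0: "\<forall>t\<ge>b. coeff e t = 0"
    by (auto simp: e_def coeff_sum coeff_monom intro!: sum.neutral)
  have inj: "inj_on h {..<b}" unfolding h_def by (rule inj_h[OF b])
  have sub: "h ` {..<b} \<subseteq> {..<n}" using n1 by (auto simp: h_def)
  have sumD: "(\<Sum>t<b. monom (coeff D (h t)) (h t)) = D"
  proof -
    have "(\<Sum>t<b. monom (coeff D (h t)) (h t)) = (\<Sum>j\<in>h ` {..<b}. monom (coeff D j) j)"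
      by (simp add: sum.reindex[OF inj])
    also have "\<dots> = (\<Sum>j<n. monom (coeff D j) j)"
    proof (rule sum.mono_neutral_left)
      show "finite {..<n}" by simp
      show "h ` {..<b} \<subseteq> {..<n}" by (rule sub)
      show "\<forall>j\<in>{..<n} - h ` {..<b}. monom (coeff D j) j = 0"
      proof
        fix j assume "j \<in> {..<n} - h ` {..<b}"
        then have "j < n" "\<forall>t<b. j \<noteq> h t" by auto
        then have "y ! j - c ! j = 0" using hi h_def by auto
        then show "monom (coeff D j) j = 0" by (simp add: cD)
      qed
    qed
    also have "\<dots> = D" by (rule poly_sum_monoms[symmetric]) (simp add: cD)
    finally show ?thesis .
  qed
  have "(monom 1 i * e) mod g = (\<Sum>t<b. monom (coeff D (h t)) (i + t)) mod g"
    by (simp add: e_def sum_distrib_left mult_monom)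
  also have "\<dots> = (\<Sum>t<b. monom (coeff D (h t)) (i + t) mod g)" by (simp add: poly_mod_sum)
  also have "\<dots> = (\<Sum>t<b. monom (coeff D (h t)) (h t) mod g)"
    by (intro sum.cong refl) (unfold h_def, rule Xmod1)
  also have "\<dots> = D mod g" by (simp add: poly_mod_sum[symmetric] sumD)
  also have "D mod g = Poly y mod g" using gd by (simp add: D_def poly_mod_diff_left)
  finally show ?thesis using e0 by blast
qed

lemma dual_U: "map (U s) [0..<n] \<in> dual_code n (cyclic_code n g)"
  unfolding dual_code_def
proof (intro CollectI conjI ballI)
  show "length (map (U s) [0..<n]) = n" by simp
  fix c assume "c \<in> cyclic_code n g"
  then have lc: "length c = n" and gd: "g dvd Poly c" unfolding cyclic_code_def by auto
  have Pc: "Poly c = (\<Sum>j<n. monom (c ! j) j)"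
  proof -
    have "Poly c = (\<Sum>j<n. monom (coeff (Poly c) j) j)"
      by (rule poly_sum_monoms) (simp add: nth_default_def lc)
    also have "\<dots> = (\<Sum>j<n. monom (c ! j) j)"
      by (intro sum.cong refl) (simp add: nth_default_def lc)
    finally show ?thesis .
  qed
  have "(\<Sum>j<n. map (U s) [0..<n] ! j * c ! j) = (\<Sum>j<n. coeff (smult (c ! j) ((monom 1 j * s) mod g)) (degree g - 1))"
    by (intro sum.cong refl) (simp add: U_def mult.commute)
  also have "\<dots> = coeff ((\<Sum>j<n. smult (c ! j) (monom 1 j * s)) mod g) (degree g - 1)"
    by (simp add: poly_mod_sum coeff_sum mod_smult_left)
  also have "(\<Sum>j<n. smult (c ! j) (monom 1 j * s)) = Poly c * s"
    by (simp add: Pc sum_distrib_right smult_monom_mult)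
  also have "(Poly c * s) mod g = 0" using gd by (simp add: mod_eq_0_iff_dvd)
  finally show "(\<Sum>j<n. map (U s) [0..<n] ! j * c ! j) = 0" by simp
qed

lemma dual_rec:
  assumes d: "d \<in> dual_code n (cyclic_code n g)" and k: "k \<ge> degree g"
  shows "d ! (k mod n) = (\<Sum>i<degree g. coeff g i * d ! ((k - degree g + i) mod n))"
proof -
  let ?r = "degree g"
  define h where "h i = (k - ?r + i) mod n" for i
  define Q where "Q = (\<Sum>i\<le>?r. monom (coeff g i) (h i))"
  have cQ: "coeff Q j = (\<Sum>i\<le>?r. if h i = j then coeff g i else 0)" for j
    by (simp add: Q_def coeff_sum coeff_monom)
  have hn: "h i < n" for i using n1 by (simp add: h_def)
  have cQ0: "coeff Q j = 0" if "j \<ge> n" for j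
  proof -
    have "\<forall>i\<in>{..?r}. (if h i = j then coeff g i else 0) = 0"
    proof
      fix i assume "i \<in> {..?r}"
      have "h i < n" by (rule hn)
      with that show "(if h i = j then coeff g i else 0) = 0" by auto
    qed
    then show ?thesis by (simp add: cQ)
  qed
  have Qg: "Q mod g = 0"
  proof -
    have "Q mod g = (\<Sum>i\<le>?r. monom (coeff g i) (h i) mod g)" by (simp add: Q_def poly_mod_sum)
    also have "\<dots> = (\<Sum>i\<le>?r. monom (coeff g i) (k - ?r + i) mod g)"
      by (intro sum.cong refl) (unfold h_def, rule Xmod1[symmetric])
    also have "\<dots> = (\<Sum>i\<le>?r. monom (coeff g i) (k - ?r + i)) mod g" by (simp add: poly_mod_sum)
    also have "(\<Sum>i\<le>?r. monom (coeff g i) (k - ?r + i)) = monom 1 (k - ?r) * g"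
      by (subst (2) poly_as_sum_of_monoms[symmetric]) (simp add: sum_distrib_left mult_monom)
    also have "(monom 1 (k - ?r) * g) mod g = 0" by simp
    finally show ?thesis .
  qed
  define c where "c = map (coeff Q) [0..<n]"
  have Pc: "Poly c = Q" unfolding c_def by (rule Poly_map_coeff) (simp add: cQ0)
  have "c \<in> cyclic_code n g" unfolding cyclic_code_def using Pc Qg
    by (simp add: c_def mod_eq_0_iff_dvd)
  with d have "(\<Sum>j<n. d ! j * c ! j) = 0" unfolding dual_code_def by blast
  then have z: "(\<Sum>j<n. d ! j * coeff Q j) = 0" by (simp add: c_def)
  have "(\<Sum>j<n. d ! j * coeff Q j) = (\<Sum>j<n. \<Sum>i\<le>?r. if h i = j then coeff g i * d ! j else 0)"
    by (simp add: cQ sum_distrib_left mult.commute if_distrib cong: if_cong)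
  also have "\<dots> = (\<Sum>i\<le>?r. \<Sum>j<n. if h i = j then coeff g i * d ! j else 0)"
    by (rule sum.swap)
  also have "\<dots> = (\<Sum>i\<le>?r. coeff g i * d ! (h i))"
    by (intro sum.cong refl) (simp add: sum.delta hn)
  also have "\<dots> = (\<Sum>i<?r. coeff g i * d ! (h i)) + d ! (k mod n)"
    using k by (simp add: lessThan_Suc_atMost[symmetric] lead1 h_def)
  finally have "(\<Sum>i<?r. coeff g i * d ! (h i)) + d ! (k mod n) = 0" using z by simp
  then have "d ! (k mod n) = - (\<Sum>i<?r. coeff g i * d ! (h i))" by (simp add: add_eq_0_iff)
  then show ?thesis by (simp add: h_def)
qed

end


lemma mod_n_zero: "(n::nat) \<ge> 1 \<Longrightarrow> (n - k mod n + k) mod n = 0"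
proof -
  assume n: "n \<ge> 1"
  define q where "q = k div n"
  define rr where "rr = k mod n"
  have kk: "k = n * q + rr" by (simp add: q_def rr_def)
  have lt: "rr < n" using n by (simp add: rr_def)
  have "n - rr + k = n * Suc q" using kk lt by simp
  then show ?thesis by (simp add: rr_def)
qed

theorem corollary3:
  fixes n r :: nat and g :: "gf2 poly"
  assumes "n \<ge> 1"
    and "g dvd monom 1 n - 1"
    and "degree g = r"
    and "r \<ge> 1"
    and "product_of_distinct_irreducibles g"
  shows "enat (burst_covering_radius n (cyclic_code n g))
           = enat r - (INF a \<in> {a. length a = r}. Z_lfsr g a)
         \<and> burst_covering_radius n (cyclic_code n g)
           = r - Min (max_zero_run_cyc ` dual_code n (cyclic_code n g))"
proof -
  interpret lctx g n by unfold_locales (use assms in auto)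
  note r = assms(3)
  let ?C = "cyclic_code n g"
  define A where "A = {a::gf2 list. length a = r}"
  define m where "m = (INF a\<in>A. Z_lfsr g a)"
  have rn: "r \<le> n" using r_le_n r by simp
  have S1: "m \<le> max_zero_run_seq (U (Poly l))" if "length l = r" for l
  proof -
    have "map (U (Poly l)) [0..<r] \<in> A" by (simp add: A_def)
    then have "m \<le> Z_lfsr g (map (U (Poly l)) [0..<r])" unfolding m_def by (rule INF_lower)
    also have "\<dots> = max_zero_run_seq (U (Poly l))" using lfsr_U[of "Poly l"] r by (simp add: Z_lfsr_def)
    finally show ?thesis .
  qed
  obtain l0 where l0: "length l0 = r" "max_zero_run_seq (U (Poly l0)) = m"
  proof -
    have ne: "Z_lfsr g ` A \<noteq> {}" by (auto simp: A_def intro!: exI[of _ "replicate r 0"])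
    then obtain z where "z \<in> Z_lfsr g ` A" by blast
    then have "(LEAST x. x \<in> Z_lfsr g ` A) \<in> Z_lfsr g ` A" by (rule LeastI)
    then have "m \<in> Z_lfsr g ` A" unfolding m_def Inf_enat_def using ne by simp
    then obtain a0 where a0: "a0 \<in> A" "Z_lfsr g a0 = m" by blast
    then obtain l where l: "length l = degree g" "lfsr g a0 = U (Poly l)"
      using lfsr_surj[of a0] r by (auto simp: A_def)
    show ?thesis by (rule that[of l]) (use l a0 r in \<open>auto simp: Z_lfsr_def\<close>)
  qed
  have degmod: "degree (p mod g) < r" for p
    using degree_mod_less[OF g0, of p] deg1 r by auto
  have m_fin: "m \<le> enat (r - 1)"
  proof -
    have "max_zero_run_seq (U 1) \<le> enat (r - 1)"
    proof (rule ccontr)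
      assume "\<not> max_zero_run_seq (U 1) \<le> enat (r - 1)"
      then have "enat (r - 1) < max_zero_run_seq (U 1)" by simp
      then have "eSuc (enat (r - 1)) \<le> max_zero_run_seq (U 1)" by (rule ileI1)
      then have "enat r \<le> max_zero_run_seq (U 1)" using assms(4) by (simp add: eSuc_enat)
      then obtain k where run: "\<forall>j<r. U 1 (k + j) = 0" using run_exists by blast
      define w where "w = (monom 1 k * 1) mod g"
      have dw: "degree w < degree g" using degmod r w_def by simp
      have "\<forall>j<degree g. coeff ((monom 1 j * w) mod g) (degree g - 1) = 0"
        using run r by (simp add: U_shift w_def)
      from F1_dir1[OF dw order.refl this] have "\<forall>i. coeff w i = 0" by simp
      then have "w = 0" by (simp add: poly_eq_iff)
      then have "(1::gf2 poly) mod g = 0" using noconst[of k 1] by (simp add: w_def)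
      then show False using one_mod by simp
    qed
    moreover have "m \<le> max_zero_run_seq (U 1)"
    proof -
      have "Poly (1 # replicate (r - 1) 0) = (1::gf2 poly)"
        using Poly_append_replicate_zero[of "[1::gf2]" "r - 1"] by simp
      moreover have "length (1 # replicate (r - 1) (0::gf2)) = r" using assms(4) by simp
      ultimately show ?thesis using S1 by metis
    qed
    ultimately show ?thesis by (rule order_trans[rotated])
  qed
  obtain m0 where m0: "m = enat m0" "m0 < r"
  proof (cases m)
    case (enat x)
    then show ?thesis using that m_fin assms(4) by simp
  next
    case infinity
    then show ?thesis using m_fin by simp
  qed
  have good: "\<forall>y. length y = n \<longrightarrow> (\<exists>c\<in>?C. in_burst n (r - m0) y c)"
  proof (intro allI impI)
    fix y :: "gf2 list" assume y: "length y = n"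
    define s where "s = Poly y mod g"
    have ds: "degree s < r" using degmod s_def by simp
    define l where "l = map (coeff s) [0..<r]"
    have Pl: "Poly l = s" "length l = r" using Poly_deg[OF ds] l_def by auto
    have "enat m0 \<le> max_zero_run_seq (U s)" using S1[of l] Pl m0 by simp
    then obtain k where run: "\<forall>j<m0. U s (k + j) = 0" using run_exists by blast
    define w where "w = (monom 1 k * s) mod g"
    have dw: "degree w < degree g" using degmod r w_def by simp
    have "\<forall>j<m0. coeff ((monom 1 j * w) mod g) (degree g - 1) = 0"
      using run by (simp add: U_shift w_def)
    from F1_dir1[OF dw _ this] have e0: "\<forall>t\<ge>r - m0. coeff w t = 0" using m0 r by simp
    define i where "i = n - k mod n"
    have ik: "(i + k) mod n = 0" unfolding i_def using mod_n_zero[OF assms(1)] by simp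
    have "(monom 1 i * w) mod g = (monom 1 (i + k) * s) mod g"
      by (simp add: w_def mod_mult_right_eq mult.assoc[symmetric] mult_monom)
    also have "\<dots> = (monom 1 ((i + k) mod n) * s) mod g" by (rule Xmod)
    also have "\<dots> = Poly y mod g" using ik by (simp add: s_def)
    finally have "(monom 1 i * w) mod g = Poly y mod g" .
    then show "\<exists>c\<in>?C. in_burst n (r - m0) y c" using burst_from[OF y _ e0] by blast
  qed
  have notgood: "\<not> (\<forall>y. length y = n \<longrightarrow> (\<exists>c\<in>?C. in_burst n b y c))" if b: "b < r - m0" for b
  proof
    assume gd: "\<forall>y. length y = n \<longrightarrow> (\<exists>c\<in>?C. in_burst n b y c)"
    define s0 where "s0 = Poly l0"
    have ds0: "degree s0 < r" using deg_Poly_lt[of l0] l0 r s0_def by simp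
    define y where "y = map (coeff s0) [0..<n]"
    have y: "length y = n" "Poly y = s0" using Poly_deg[of s0 n] ds0 rn by (auto simp: y_def)
    from gd y obtain c where cC: "c \<in> ?C" and cb: "in_burst n b y c" by blast
    have bn: "b \<le> n" using b rn by linarith
    from burst_to[OF y(1) cC cb bn] obtain i e where
      e0: "\<forall>t\<ge>b. coeff e t = 0" and ie: "(monom 1 i * e) mod g = Poly y mod g" by blast
    have "degree e \<le> r - 1" by (rule degree_le) (use e0 b in auto)
    then have de: "degree e < degree g" using assms(4) r by linarith
    define k where "k = n - i mod n"
    have ki: "(k + i) mod n = 0" unfolding k_def using mod_n_zero[OF assms(1)] by simp
    have "(monom 1 k * s0) mod g = (monom 1 k * (s0 mod g)) mod g" by (simp add: mod_mult_right_eq)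
    also have "s0 mod g = (monom 1 i * e) mod g" using ie y by simp
    also have "(monom 1 k * ((monom 1 i * e) mod g)) mod g = (monom 1 (k + i) * e) mod g"
      by (simp add: mod_mult_right_eq mult.assoc[symmetric] mult_monom)
    also have "\<dots> = (monom 1 ((k + i) mod n) * e) mod g" by (rule Xmod)
    also have "\<dots> = e" using ki de by (simp add: mod_poly_less)
    finally have w: "(monom 1 k * s0) mod g = e" .
    have "\<forall>j<r - b. coeff ((monom 1 j * e) mod g) (degree g - 1) = 0"
      by (rule F1_dir2) (use e0 b r in auto)
    then have "\<forall>j<r - b. U s0 (k + j) = 0" by (simp add: U_shift w)
    then have "enat (r - b) \<le> max_zero_run_seq (U s0)" by (rule run_le)
    then have "r - b \<le> m0" using l0 m0 s0_def by simp
    then show False using b by linarith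
  qed
  have bc: "burst_covering_radius n ?C = r - m0"
    unfolding burst_covering_radius_def
  proof (rule Least_equality)
    show "\<forall>y. length y = n \<longrightarrow> (\<exists>c\<in>?C. in_burst n (r - m0) y c)" by (rule good)
    fix b assume "\<forall>y. length y = n \<longrightarrow> (\<exists>c\<in>?C. in_burst n b y c)"
    then show "r - m0 \<le> b" using notgood by (meson not_le)
  qed
  define D where "D = dual_code n ?C"
  have finS: "finite {L. L \<le> length d \<and> (\<exists>i. \<forall>t<L. d ! ((i + t) mod length d) = 0)}" for d :: "gf2 list"
    by (rule finite_subset[of _ "{..length d}"]) auto
  have cyc_ge: "m0 \<le> max_zero_run_cyc d" if d: "d \<in> D" for d
  proof -
    have ld: "length d = n" using d by (simp add: D_def dual_code_def)
    define v where "v k = d ! (k mod n)" for k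
    have rec: "\<forall>k\<ge>degree g. v k = (\<Sum>i<degree g. coeff g i * v (k - degree g + i))"
      using dual_rec d by (simp add: v_def D_def)
    obtain l where l: "length l = degree g" "lfsr g (map v [0..<degree g]) = U (Poly l)"
      using lfsr_surj[of "map v [0..<degree g]"] by auto
    have vU: "v = U (Poly l)"
    proof
      fix k show "v k = U (Poly l) k" using lfsr_eq[OF rec, of k] l(2) by simp
    qed
    have "enat m0 \<le> max_zero_run_seq (U (Poly l))" using S1[of l] l(1) r m0 by simp
    then obtain k where run: "\<forall>j<m0. U (Poly l) (k + j) = 0" using run_exists by blast
    have "\<forall>t<m0. d ! ((k + t) mod n) = 0"
    proof (intro allI impI)
      fix t assume "t < m0"
      then have "U (Poly l) (k + t) = 0" using run by simp
      then show "d ! ((k + t) mod n) = 0" using fun_cong[OF vU, of "k + t"] by (simp add: v_def)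
    qed
    then have "m0 \<in> {L. L \<le> length d \<and> (\<exists>i. \<forall>t<L. d ! ((i + t) mod length d) = 0)}"
      using ld m0 rn by auto
    then show ?thesis unfolding max_zero_run_cyc_def by (rule Max_ge[OF finS])
  qed
  define d0 where "d0 = map (U (Poly l0)) [0..<n]"
  have d0D: "d0 \<in> D" using dual_U by (simp add: d0_def D_def)
  have d0le: "max_zero_run_cyc d0 \<le> m0"
    unfolding max_zero_run_cyc_def
  proof (rule Max.boundedI[OF finS])
    show "{L. L \<le> length d0 \<and> (\<exists>i. \<forall>t<L. d0 ! ((i + t) mod length d0) = 0)} \<noteq> {}" by auto
    fix L assume "L \<in> {L. L \<le> length d0 \<and> (\<exists>i. \<forall>t<L. d0 ! ((i + t) mod length d0) = 0)}"
    then obtain i where Li: "\<forall>t<L. d0 ! ((i + t) mod n) = 0" by (auto simp: d0_def)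
    have "\<forall>t<L. U (Poly l0) (i + t) = 0"
    proof (intro allI impI)
      fix t assume "t < L"
      then have "d0 ! ((i + t) mod n) = 0" using Li by simp
      moreover have "(i + t) mod n < n" using assms(1) by simp
      ultimately show "U (Poly l0) (i + t) = 0" using U_period[of "Poly l0" "i + t"] by (simp add: d0_def)
    qed
    then have "enat L \<le> max_zero_run_seq (U (Poly l0))" by (rule run_le)
    then show "L \<le> m0" using l0 m0 by simp
  qed
  have finD: "finite D"
  proof (rule finite_subset)
    show "D \<subseteq> {xs. set xs \<subseteq> UNIV \<and> length xs = n}" by (auto simp: D_def dual_code_def)
    show "finite {xs :: gf2 list. set xs \<subseteq> UNIV \<and> length xs = n}" by (rule finite_lists_length_eq) simp
  qed
  have MinD: "Min (max_zero_run_cyc ` D) = m0"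
  proof (rule Min_eqI)
    show "finite (max_zero_run_cyc ` D)" using finD by simp
    fix z assume "z \<in> max_zero_run_cyc ` D" then show "m0 \<le> z" using cyc_ge by auto
  next
    have "max_zero_run_cyc d0 = m0" using d0le cyc_ge[OF d0D] by simp
    then show "m0 \<in> max_zero_run_cyc ` D" using d0D by (metis image_eqI)
  qed
  have INFeq: "(INF a \<in> {a. length a = r}. Z_lfsr g a) = enat m0" using m0 by (simp add: m_def A_def)
  show ?thesis using bc MinD INFeq by (simp add: D_def)
qed

end
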